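(* Let $$A=\begin{pmatrix} 0 & z & -y\\ -z & 0 & x\\ y & -x & 0\end{pmatrix}$$ be a matrix over the polynomial ring $\mathbb{R}[x,y,z]$. Then $A$ is not algebraically shift equivalent over $\mathbb{R}[x,y,z]$ to any nonsingular square matrix over $\mathbb{R}[x,y,z]$. In particular, $A$ is a non-nilpotent matrix over $\mathbb{R}[x,y,z]=\mathbb{R}[x][y,z]$ that is not algebraically shift equivalent to a nonsingular matrix.
   Context: A square matrix over the domain $\mathbb{R}[x,y,z]$ is nonsingular if its determinant is nonzero. Two square matrices $A$ (of order $p$) and $B$ (of order $q$) over a commutative ring $R$ are algebraically shift equivalent of lag $l\in\mathbb{N}$ over $R$ if there exist a $p\times q$ matrix $U$ and a $q\times p$ matrix $V$ over $R$ with $AU=UB$, $VA=BV$, $A^l=UV$ and $B^l=VU$; they are algebraically shift equivalent if this holds for some $l\in\mathbb{N}$. *)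

theory Defs
  imports "HOL-Computational_Algebra.Polynomial" "Jordan_Normal_Form.Determinant"
begin

text \<open>The polynomial ring R[x,y,z] is rendered as the iterated polynomial ring
  ((R[x])[y])[z], i.e. the type real poly poly poly.\<close>

type_synonym rpoly3 = "real poly poly poly"

definition varX :: rpoly3 where "varX = [:[:[:0, 1:]:]:]"
definition varY :: rpoly3 where "varY = [:[:0, 1:]:]"
definition varZ :: rpoly3 where "varZ = [:0, 1:]"

definition matA :: "rpoly3 mat" where
  "matA = mat_of_rows_list 3
     [[0, varZ, - varY],
      [- varZ, 0, varX],
      [varY, - varX, 0]]"

definition alg_shift_equiv_lag :: "nat \<Rightarrow> 'a :: comm_ring_1 mat \<Rightarrow> 'a mat \<Rightarrow> bool" where
  "alg_shift_equiv_lag l A B \<longleftrightarrow>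
     square_mat A \<and> square_mat B \<and>
     (\<exists>U V. U \<in> carrier_mat (dim_row A) (dim_row B) \<and>
            V \<in> carrier_mat (dim_row B) (dim_row A) \<and>
            A * U = U * B \<and> V * A = B * V \<and>
            A ^\<^sub>m l = U * V \<and> B ^\<^sub>m l = V * U)"

definition alg_shift_equiv :: "'a :: comm_ring_1 mat \<Rightarrow> 'a mat \<Rightarrow> bool" where
  "alg_shift_equiv A B \<longleftrightarrow> (\<exists>l. alg_shift_equiv_lag l A B)"

definition nonsingular_mat :: "'a :: comm_ring_1 mat \<Rightarrow> bool" where
  "nonsingular_mat B \<longleftrightarrow> square_mat B \<and> det B \<noteq> 0"

definition nilpotent_mat :: "'a :: comm_ring_1 mat \<Rightarrow> bool" where
  "nilpotent_mat A \<longleftrightarrow> (\<exists>k. A ^\<^sub>m k = 0\<^sub>m (dim_row A) (dim_col A))"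

end

theory Submission
  imports Defs "HOL-Homology.Brouwer_Degree"
begin

lemma topspace_nsphere2:
  "topspace (nsphere 2) = {x. x 0 ^ 2 + x 1 ^ 2 + x 2 ^ 2 = 1 \<and> (\<forall>i>2. x i = 0)}"
  by (simp add: nsphere numeral_2_eq_2 add.commute add.left_commute)

definition refl_c :: "nat \<Rightarrow> (nat \<Rightarrow> real) \<Rightarrow> nat \<Rightarrow> real" where
  "refl_c k x = (\<lambda>i. if i = k then - x i else x i)"

definition swp :: "nat \<Rightarrow> (nat \<Rightarrow> real) \<Rightarrow> nat \<Rightarrow> real" where
  "swp k x = (\<lambda>i. if i = 0 then x k else if i = k then x 0 else x i)"

lemma cont_refl_c: "continuous_map (nsphere p) (nsphere p) (refl_c k)"
  unfolding refl_c_def by (rule continuous_map_nsphere_reflection)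

lemma cont_swp:
  assumes k: "k \<le> 2"
  shows "continuous_map (nsphere 2) (nsphere 2) (swp k)"
proof -
  have cm: "continuous_map (powertop_real UNIV) euclideanreal (\<lambda>x. swp k x j)" for j
    unfolding swp_def by (auto intro: continuous_map_product_projection)
  have "k = 0 \<or> k = 1 \<or> k = 2" using k by auto
  then have img: "swp k x \<in> topspace (nsphere 2)" if "x \<in> topspace (nsphere 2)" for x
    using that unfolding topspace_nsphere2 swp_def by auto
  show ?thesis
    unfolding continuous_map_in_subtopology nsphere[of 2]
    apply (intro conjI)
     apply (simp add: continuous_map_componentwise_UNIV)
     apply (intro allI continuous_map_from_subtopology cm)
    using img unfolding nsphere[of 2] by auto
qed

lemma swp_swp: "swp k \<circ> swp k = id"
  by (auto simp: swp_def fun_eq_iff)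

lemma deg_swp: assumes "k \<le> 2" shows "Brouwer_degree2 2 (swp k) * Brouwer_degree2 2 (swp k) = 1"
  using Brouwer_degree2_compose[OF cont_swp[OF assms] cont_swp[OF assms]] swp_swp by simp

lemma refl_conj: "k \<noteq> 0 \<Longrightarrow> refl_c k = swp k \<circ> refl_c 0 \<circ> swp k"
  by (auto simp: swp_def refl_c_def fun_eq_iff)

lemma deg_refl: assumes "k \<le> 2" shows "Brouwer_degree2 2 (refl_c k) = -1"
proof (cases "k = 0")
  case True
  then show ?thesis using Brouwer_degree2_reflection[of 2] unfolding refl_c_def by simp
next
  case False
  have r0: "Brouwer_degree2 2 (refl_c 0) = -1"
    using Brouwer_degree2_reflection[of 2] unfolding refl_c_def by simp
  have "Brouwer_degree2 2 (refl_c k) = Brouwer_degree2 2 ((swp k \<circ> refl_c 0) \<circ> swp k)"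
    using refl_conj[OF False] by (simp add: comp_assoc)
  also have "\<dots> = Brouwer_degree2 2 (swp k) * Brouwer_degree2 2 (refl_c 0) * Brouwer_degree2 2 (swp k)"
  proof -
    have c1: "continuous_map (nsphere 2) (nsphere 2) (swp k \<circ> refl_c 0)"
      by (rule continuous_map_compose[OF cont_refl_c cont_swp[OF assms]])
    show ?thesis
      using Brouwer_degree2_compose[OF cont_swp[OF assms] c1]
            Brouwer_degree2_compose[OF cont_refl_c cont_swp[OF assms], of 0]
      by simp
  qed
  also have "\<dots> = -1" using r0 deg_swp[OF assms] by (simp add: algebra_simps)
  finally show ?thesis .
qed

lemma deg_antip: "Brouwer_degree2 2 (refl_c 0 \<circ> refl_c 1 \<circ> refl_c 2) = -1"
proof -
  have c1: "continuous_map (nsphere 2) (nsphere 2) (refl_c 0 \<circ> refl_c 1)"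
    by (rule continuous_map_compose[OF cont_refl_c cont_refl_c])
  show ?thesis
    using Brouwer_degree2_compose[OF cont_refl_c c1, of 2]
          Brouwer_degree2_compose[OF cont_refl_c[of 2 1] cont_refl_c[of 2 0]]
          deg_refl[of 0] deg_refl[of 1] deg_refl[of 2]
    by simp
qed

lemma cont_into_nsphere:
  assumes "\<And>i. continuous_map X euclideanreal (\<lambda>z. g z i)"
    and "\<And>z. z \<in> topspace X \<Longrightarrow> g z \<in> topspace (nsphere p)"
  shows "continuous_map X (nsphere p) g"
proof -
  have "continuous_map X (powertop_real UNIV) g"
    by (simp add: continuous_map_componentwise_UNIV assms(1))
  moreover have "g ` topspace X \<subseteq> {x. (\<Sum>i\<le>p. x i ^ 2) = 1 \<and> (\<forall>i>p. x i = 0)}"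
    using assms(2) unfolding nsphere by auto
  ultimately show ?thesis
    unfolding nsphere continuous_map_in_subtopology by blast
qed

lemma cont_snd_comp:
  assumes "continuous_map X euclideanreal g"
  shows "continuous_map (prod_topology T X) euclideanreal (\<lambda>z. g (snd z))"
  using continuous_map_compose[OF continuous_map_snd assms] by (simp add: o_def)

lemma cont_fst_trig:
  "continuous_map (prod_topology (top_of_set {0..1::real}) X) euclideanreal (\<lambda>z. cos (pi * fst z))"
  "continuous_map (prod_topology (top_of_set {0..1::real}) X) euclideanreal (\<lambda>z. sin (pi * fst z))"
proof -
  have f: "continuous_map (prod_topology (top_of_set {0..1::real}) X) euclideanreal fst"
  proof -
    have i: "continuous_map (top_of_set {0..1::real}) euclideanreal (\<lambda>x. x)"
      by simp
    show ?thesis using continuous_map_compose[OF continuous_map_fst i] by (simp add: o_def)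
  qed
  have cc: "continuous_map euclideanreal euclideanreal (\<lambda>t. cos (pi * t))"
    by (simp add: continuous_intros)
  have ss: "continuous_map euclideanreal euclideanreal (\<lambda>t. sin (pi * t))"
    by (simp add: continuous_intros)
  show "continuous_map (prod_topology (top_of_set {0..1::real}) X) euclideanreal (\<lambda>z. cos (pi * fst z))"
    using continuous_map_compose[OF f cc] by (simp add: o_def)
  show "continuous_map (prod_topology (top_of_set {0..1::real}) X) euclideanreal (\<lambda>z. sin (pi * fst z))"
    using continuous_map_compose[OF f ss] by (simp add: o_def)
qed

lemma hairy_ball:
  fixes f :: "(nat \<Rightarrow> real) \<Rightarrow> nat \<Rightarrow> real"
  assumes cont: "\<And>i. i \<le> 2 \<Longrightarrow> continuous_map (nsphere 2) euclideanreal (\<lambda>x. f x i)"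
    and tang: "\<And>x. x \<in> topspace (nsphere 2) \<Longrightarrow> x 0 * f x 0 + x 1 * f x 1 + x 2 * f x 2 = 0"
    and nz: "\<And>x. x \<in> topspace (nsphere 2) \<Longrightarrow> f x 0 \<noteq> 0 \<or> f x 1 \<noteq> 0 \<or> f x 2 \<noteq> 0"
  shows False
proof -
  define N where "N x = sqrt (f x 0 ^ 2 + f x 1 ^ 2 + f x 2 ^ 2)" for x
  have Npos: "N x > 0" if "x \<in> topspace (nsphere 2)" for x
  proof -
    have "f x 0 ^ 2 + f x 1 ^ 2 + f x 2 ^ 2 > 0"
      using nz[OF that] by (smt (verit) zero_le_power2 zero_less_power2)
    then show ?thesis unfolding N_def by simp
  qed
  have N2: "N x ^ 2 = f x 0 ^ 2 + f x 1 ^ 2 + f x 2 ^ 2" for x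
    unfolding N_def by simp
  define w where "w x i = f x i / N x" for x i
  have contN: "continuous_map (nsphere 2) euclideanreal N"
    unfolding N_def by (intro continuous_map_sqrt continuous_map_add continuous_map_real_pow cont) auto
  have contw: "continuous_map (nsphere 2) euclideanreal (\<lambda>x. w x i)" if "i \<le> 2" for i
    unfolding w_def
    by (intro continuous_map_real_divide cont that contN) (metis Npos less_irrefl)
  define h where "h z = (\<lambda>i. if i \<le> 2 then cos (pi * fst z) * snd z i + sin (pi * fst z) * w (snd z) i
                              else snd z i)" for z
  have h0: "h (0, x) = id x" for x by (auto simp: h_def fun_eq_iff)
  have h1: "h (1, x) = (refl_c 0 \<circ> refl_c 1 \<circ> refl_c 2) x" for x
  proof
    fix i :: nat
    have "i \<le> 2 \<longleftrightarrow> i = 0 \<or> i = 1 \<or> i = 2" by auto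
    then show "h (1, x) i = (refl_c 0 \<circ> refl_c 1 \<circ> refl_c 2) x i"
      unfolding h_def refl_c_def by (cases "i = 0"; cases "i = 1"; cases "i = 2") simp_all
  qed
  have himg: "h z \<in> topspace (nsphere 2)" if "z \<in> topspace (prod_topology (top_of_set {0..1::real}) (nsphere 2))" for z
  proof -
    obtain t x where z: "z = (t, x)" by (cases z)
    have x: "x \<in> topspace (nsphere 2)"
      using that unfolding z topspace_prod_topology by (simp only: mem_Times_iff fst_conv snd_conv)
    have xs: "x 0 ^ 2 + x 1 ^ 2 + x 2 ^ 2 = 1" and xz: "\<forall>i>2. x i = 0"
      using x unfolding topspace_nsphere2 by auto
    have Nx: "N x > 0" using Npos[OF x] .
    have "w x 0 ^ 2 + w x 1 ^ 2 + w x 2 ^ 2 = (f x 0 ^ 2 + f x 1 ^ 2 + f x 2 ^ 2) / N x ^ 2"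
      unfolding w_def by (simp add: power_divide add_divide_distrib)
    also have "\<dots> = N x ^ 2 / N x ^ 2" by (simp only: N2)
    also have "\<dots> = 1" using Nx by simp
    finally have ws: "w x 0 ^ 2 + w x 1 ^ 2 + w x 2 ^ 2 = 1" .
    have "x 0 * w x 0 + x 1 * w x 1 + x 2 * w x 2 = (x 0 * f x 0 + x 1 * f x 1 + x 2 * f x 2) / N x"
      unfolding w_def by (simp add: add_divide_distrib)
    then have wt: "x 0 * w x 0 + x 1 * w x 1 + x 2 * w x 2 = 0" using tang[OF x] by simp
    define c where "c = cos (pi * t)"
    define s where "s = sin (pi * t)"
    have cs: "c^2 + s^2 = 1" unfolding c_def s_def by simp
    have "(c * x 0 + s * w x 0) ^ 2 + (c * x 1 + s * w x 1) ^ 2 + (c * x 2 + s * w x 2) ^ 2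
        = c^2 * (x 0 ^ 2 + x 1 ^ 2 + x 2 ^ 2) + s^2 * (w x 0 ^ 2 + w x 1 ^ 2 + w x 2 ^ 2)
          + 2 * c * s * (x 0 * w x 0 + x 1 * w x 1 + x 2 * w x 2)"
      by (simp add: power2_eq_square algebra_simps)
    also have "\<dots> = 1" using xs ws wt cs by simp
    finally have "(c * x 0 + s * w x 0) ^ 2 + (c * x 1 + s * w x 1) ^ 2 + (c * x 2 + s * w x 2) ^ 2 = 1" .
    moreover have "h z = (\<lambda>i. if i \<le> 2 then c * x i + s * w x i else x i)"
      unfolding z h_def c_def s_def by (simp only: fst_conv snd_conv)
    ultimately show ?thesis
      unfolding topspace_nsphere2 using xz by simp
  qed
  have hcont: "continuous_map (prod_topology (top_of_set {0..1::real}) (nsphere 2)) (nsphere 2) h"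
  proof -
    have comp: "continuous_map (prod_topology (top_of_set {0..1::real}) (nsphere 2)) euclideanreal (\<lambda>z. h z i)" for i
    proof (cases "i \<le> 2")
      case True
      have a: "continuous_map (prod_topology (top_of_set {0..1::real}) (nsphere 2)) euclideanreal (\<lambda>z. snd z i)"
        by (rule cont_snd_comp[OF continuous_map_nsphere_projection])
      have b: "continuous_map (prod_topology (top_of_set {0..1::real}) (nsphere 2)) euclideanreal (\<lambda>z. w (snd z) i)"
        by (rule cont_snd_comp[OF contw[OF True]])
      show ?thesis unfolding h_def using True
        by (simp, intro continuous_map_add continuous_map_real_mult cont_fst_trig a b)
    next
      case False
      then show ?thesis unfolding h_def
        using cont_snd_comp[OF continuous_map_nsphere_projection] by simp
    qed
    show ?thesis
      by (rule cont_into_nsphere[OF comp himg])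
  qed
  have "homotopic_with (\<lambda>x. True) (nsphere 2) (nsphere 2) id (refl_c 0 \<circ> refl_c 1 \<circ> refl_c 2)"
    unfolding homotopic_with_def
    using hcont h0 h1 by (intro exI[of _ h]) auto
  then have "Brouwer_degree2 2 id = Brouwer_degree2 2 (refl_c 0 \<circ> refl_c 1 \<circ> refl_c 2)"
    by (rule Brouwer_degree2_homotopic)
  then show False using deg_antip by simp
qed

lemma sum3: "(\<Sum>k\<in>{0..<3::nat}. f k) = f 0 + f 1 + f 2"
  by (simp add: eval_nat_numeral atLeast0LessThan lessThan_Suc add_ac)

lemma less3: "(i::nat) < 3 \<longleftrightarrow> i = 0 \<or> i = 1 \<or> i = 2" by auto

lemma matA_carrier: "matA \<in> carrier_mat 3 3"
  unfolding matA_def mat_of_rows_list_def by auto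

lemma matA_idx:
  "matA $$ (0,0) = 0" "matA $$ (0,1) = varZ" "matA $$ (0,2) = - varY"
  "matA $$ (1,0) = - varZ" "matA $$ (1,1) = 0" "matA $$ (1,2) = varX"
  "matA $$ (2,0) = varY" "matA $$ (2,1) = - varX" "matA $$ (2,2) = 0"
  unfolding matA_def mat_of_rows_list_def by (simp_all add: eval_nat_numeral)

lemma matA_idx':
  "matA $$ (0,Suc 0) = varZ" "matA $$ (Suc 0,0) = - varZ" "matA $$ (Suc 0,Suc 0) = 0"
  "matA $$ (Suc 0,2) = varX" "matA $$ (2,Suc 0) = - varX"
  using matA_idx by simp_all

lemma det_matA: "det matA = 0"
proof -
  define v :: "rpoly3 Matrix.vec" where "v = Matrix.vec 3 (\<lambda>i. if i = 0 then varX else if i = 1 then varY else varZ)"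
  have vc: "v \<in> carrier_vec 3" unfolding v_def by simp
  have "v $ 0 = varX" unfolding v_def by simp
  moreover have "varX \<noteq> 0" unfolding varX_def by simp
  ultimately have vnz: "v \<noteq> 0\<^sub>v 3" by auto
  have "matA *\<^sub>v v = 0\<^sub>v 3"
  proof (rule eq_vecI)
    fix i assume "i < dim_vec (0\<^sub>v 3 :: rpoly3 Matrix.vec)"
    then have i: "i < 3" by simp
    have "(matA *\<^sub>v v) $ i = (\<Sum>k\<in>{0..<3}. matA $$ (i,k) * v $ k)"
      using i matA_carrier vc by (simp add: scalar_prod_def)
    also have "\<dots> = 0"
      using i unfolding sum3 less3 v_def by (auto simp: matA_idx matA_idx' algebra_simps)
    finally show "(matA *\<^sub>v v) $ i = 0\<^sub>v 3 $ i" using i by simp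
  qed (insert matA_carrier, auto)
  then show ?thesis using det_0_iff_vec_prod_zero[OF matA_carrier] vc vnz by blast
qed

lemma pow_mat_add:
  assumes A: "A \<in> carrier_mat n n"
  shows "A ^\<^sub>m (m + k) = A ^\<^sub>m m * A ^\<^sub>m k"
proof (induction k)
  case 0
  then show ?case using A by simp
next
  case (Suc k)
  have "A ^\<^sub>m (m + Suc k) = (A ^\<^sub>m m * A ^\<^sub>m k) * A" using Suc by simp
  also have "\<dots> = A ^\<^sub>m m * (A ^\<^sub>m k * A)"
    using A by (simp add: assoc_mult_mat[of _ n n _ n _ n])
  finally show ?case by simp
qed

lemma det_pow:
  assumes A: "(A :: 'a :: comm_ring_1 mat) \<in> carrier_mat n n"
  shows "det (A ^\<^sub>m k) = det A ^ k"
proof (induction k)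
  case (Suc k)
  then show ?case using A by (simp add: det_mult[of _ n])
qed (insert A, simp)

definition ev :: "real \<Rightarrow> real \<Rightarrow> real \<Rightarrow> rpoly3 \<Rightarrow> real" where
  "ev a b c q = poly (poly (poly q [:[:c:]:]) [:b:]) a"

lemma ev_hom: "comm_ring_hom (ev a b c)"
  by unfold_locales (simp_all add: ev_def)

lemma ev_vars: "ev a b c varX = a" "ev a b c varY = b" "ev a b c varZ = c"
  unfolding ev_def varX_def varY_def varZ_def by simp_all

lemma ev_uminus: "ev a b c (- q) = - ev a b c q" and ev_zero: "ev a b c 0 = 0"
  unfolding ev_def by simp_all

definition pt :: "real \<Rightarrow> real \<Rightarrow> real \<Rightarrow> nat \<Rightarrow> real" where
  "pt a b c i = (if i = 0 then a else if i = 1 then b else c)"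

definition Aent :: "real \<Rightarrow> real \<Rightarrow> real \<Rightarrow> nat \<Rightarrow> nat \<Rightarrow> real" where
  "Aent a b c i j = (if i = 0 \<and> j = 1 then c else if i = 0 \<and> j = 2 then - b
     else if i = 1 \<and> j = 0 then - c else if i = 1 \<and> j = 2 then a
     else if i = 2 \<and> j = 0 then b else if i = 2 \<and> j = 1 then - a else 0)"

definition Mr :: "real \<Rightarrow> real \<Rightarrow> real \<Rightarrow> real mat" where
  "Mr a b c = Matrix.mat 3 3 (\<lambda>(i,j). Aent a b c i j)"

definition Qm :: "real \<Rightarrow> real \<Rightarrow> real \<Rightarrow> real mat" where
  "Qm a b c = Matrix.mat 3 3 (\<lambda>(i,j). pt a b c i * pt a b c j - (if i = j then 1 else 0))"

definition Pm :: "real \<Rightarrow> real \<Rightarrow> real \<Rightarrow> real mat" where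
  "Pm a b c = Matrix.mat 3 3 (\<lambda>(i,j). (if i = j then 1 else 0) - pt a b c i * pt a b c j)"

lemma carriers: "Mr a b c \<in> carrier_mat 3 3" "Qm a b c \<in> carrier_mat 3 3" "Pm a b c \<in> carrier_mat 3 3"
  unfolding Mr_def Qm_def Pm_def by auto

lemma ev_matA: "map_mat (ev a b c) matA = Mr a b c"
proof (rule eq_matI)
  fix i j assume "i < dim_row (Mr a b c)" "j < dim_col (Mr a b c)"
  then have ij: "i < 3" "j < 3" by (simp_all add: Mr_def)
  then show "map_mat (ev a b c) matA $$ (i, j) = Mr a b c $$ (i, j)"
    using matA_carrier unfolding less3 Mr_def
    by (auto simp: matA_idx matA_idx' Aent_def ev_vars ev_uminus ev_zero)
qed (use matA_carrier in \<open>auto simp: Mr_def\<close>)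

lemma mult3:
  assumes "A \<in> carrier_mat 3 3" "B \<in> carrier_mat 3 3" "i < 3" "j < 3"
  shows "(A * B) $$ (i,j) = A $$ (i,0) * B $$ (0,j) + A $$ (i,1) * B $$ (1,j) + A $$ (i,2) * B $$ (2,j)"
  using assms by (simp add: scalar_prod_def sum3)

lemma MM: assumes s: "a^2 + b^2 + c^2 = 1" shows "Mr a b c * Mr a b c = Qm a b c"
proof (rule eq_matI)
  fix i j assume "i < dim_row (Qm a b c)" "j < dim_col (Qm a b c)"
  then have ij: "i < 3" "j < 3" by (simp_all add: Qm_def)
  have s': "a * a + b * b + c * c = 1" using s by (simp add: power2_eq_square)
  show "(Mr a b c * Mr a b c) $$ (i, j) = Qm a b c $$ (i, j)"
    unfolding mult3[OF carriers(1) carriers(1) ij]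
    using ij s' unfolding less3 by (auto simp: Mr_def Qm_def Aent_def pt_def algebra_simps)
qed (auto simp: Qm_def Mr_def)

lemma all9:
  fixes P :: "nat \<Rightarrow> nat \<Rightarrow> bool" and i j :: nat
  assumes "P 0 0" "P 0 1" "P 0 2" "P 1 0" "P 1 1" "P 1 2" "P 2 0" "P 2 1" "P 2 2"
    and "i < 3" "j < 3"
  shows "P i j"
proof -
  have "i = 0 \<or> i = 1 \<or> i = 2" "j = 0 \<or> j = 1 \<or> j = 2" using assms(10,11) by auto
  then show ?thesis using assms(1-9) by auto
qed

lemma QQ: assumes s: "a^2 + b^2 + c^2 = 1" shows "Qm a b c * Qm a b c = Pm a b c"
proof (rule eq_matI)
  fix i j assume "i < dim_row (Pm a b c)" "j < dim_col (Pm a b c)"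
  then have ij: "i < 3" "j < 3" by (simp_all add: Pm_def)
  have s': "a * a + b * b + c * c - 1 = 0" using s by (simp add: power2_eq_square)
  have e: "(pt a b c i * pt a b c 0 - (if i = 0 then 1 else 0)) * (pt a b c 0 * pt a b c j - (if 0 = j then 1 else 0))
   + (pt a b c i * pt a b c 1 - (if i = 1 then 1 else 0)) * (pt a b c 1 * pt a b c j - (if 1 = j then 1 else 0))
   + (pt a b c i * pt a b c 2 - (if i = 2 then 1 else 0)) * (pt a b c 2 * pt a b c j - (if 2 = j then 1 else 0))
   = (if i = j then 1 else 0) - pt a b c i * pt a b c j + pt a b c i * pt a b c j * (a * a + b * b + c * c - 1)"
    apply (rule all9[OF _ _ _ _ _ _ _ _ _ ij])
    apply (simp_all add: pt_def algebra_simps)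
    done
  show "(Qm a b c * Qm a b c) $$ (i, j) = Pm a b c $$ (i, j)"
    unfolding mult3[OF carriers(2) carriers(2) ij] using ij e s' by (simp add: Qm_def Pm_def)
qed (auto simp: Qm_def Pm_def)

lemma PP: assumes s: "a^2 + b^2 + c^2 = 1" shows "Pm a b c * Pm a b c = Pm a b c"
proof (rule eq_matI)
  fix i j assume "i < dim_row (Pm a b c)" "j < dim_col (Pm a b c)"
  then have ij: "i < 3" "j < 3" by (simp_all add: Pm_def)
  have s': "a * a + b * b + c * c - 1 = 0" using s by (simp add: power2_eq_square)
  have e: "((if i = 0 then 1 else 0) - pt a b c i * pt a b c 0) * ((if 0 = j then 1 else 0) - pt a b c 0 * pt a b c j)
   + ((if i = 1 then 1 else 0) - pt a b c i * pt a b c 1) * ((if 1 = j then 1 else 0) - pt a b c 1 * pt a b c j)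
   + ((if i = 2 then 1 else 0) - pt a b c i * pt a b c 2) * ((if 2 = j then 1 else 0) - pt a b c 2 * pt a b c j)
   = (if i = j then 1 else 0) - pt a b c i * pt a b c j + pt a b c i * pt a b c j * (a * a + b * b + c * c - 1)"
    apply (rule all9[OF _ _ _ _ _ _ _ _ _ ij])
    apply (simp_all add: pt_def algebra_simps)
    done
  show "(Pm a b c * Pm a b c) $$ (i, j) = Pm a b c $$ (i, j)"
    unfolding mult3[OF carriers(3) carriers(3) ij] using ij e s' by (simp add: Pm_def)
qed (auto simp: Pm_def)

lemma M4: assumes s: "a^2 + b^2 + c^2 = 1" shows "Mr a b c ^\<^sub>m 4 = Pm a b c"
proof -
  have "Mr a b c ^\<^sub>m 4 = Mr a b c ^\<^sub>m 2 * Mr a b c ^\<^sub>m 2"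
    using pow_mat_add[OF carriers(1), of a b c 2 2] by simp
  also have "Mr a b c ^\<^sub>m 2 = Qm a b c"
    using MM[OF s] carriers(1)[of a b c] by (simp add: numeral_2_eq_2)
  finally show ?thesis using QQ[OF s] by simp
qed

lemma M4k: assumes s: "a^2 + b^2 + c^2 = 1" shows "Mr a b c ^\<^sub>m (4 * Suc k) = Pm a b c"
proof (induction k)
  case 0 then show ?case using M4[OF s] by simp
next
  case (Suc k)
  have "Mr a b c ^\<^sub>m (4 * Suc (Suc k)) = Mr a b c ^\<^sub>m (4 * Suc k) * Mr a b c ^\<^sub>m 4"
    using pow_mat_add[OF carriers(1), of a b c "4 * Suc k" 4] by (simp add: algebra_simps)
  then show ?case using Suc M4[OF s] PP[OF s] by simp
qed

lemma rank1_contra: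
  assumes s: "a^2 + b^2 + c^2 = 1"
    and h: "\<And>i k. i < 3 \<Longrightarrow> k < 3 \<Longrightarrow> (if i = k then 1 else 0) - pt a b c i * pt a b c k = g i * h k"
  shows False
proof -
  have e00: "1 - a * a = g 0 * h 0" using h[of 0 0] by (simp add: pt_def)
  have e11: "1 - b * b = g 1 * h 1" using h[of 1 1] by (simp add: pt_def)
  have e22: "1 - c * c = g 2 * h 2" using h[of 2 2] by (simp add: pt_def)
  have e01: "- (a * b) = g 0 * h 1" using h[of 0 1] by (simp add: pt_def)
  have e10: "- (b * a) = g 1 * h 0" using h[of 1 0] by (simp add: pt_def)
  have e02: "- (a * c) = g 0 * h 2" using h[of 0 2] by (simp add: pt_def)
  have e20: "- (c * a) = g 2 * h 0" using h[of 2 0] by (simp add: pt_def)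
  have e12: "- (b * c) = g 1 * h 2" using h[of 1 2] by (simp add: pt_def)
  have e21: "- (c * b) = g 2 * h 1" using h[of 2 1] by (simp add: pt_def)
  have m: "\<And>x y z w. (g x * h x) * (g y * h y) = (g x * h y) * (g y * h x)"
    by (simp add: algebra_simps)
  have "(1 - a * a) * (1 - b * b) = (- (a * b)) * (- (b * a))"
    using m[of 0 1] by (simp only: e00 e11 e01 e10)
  then have c0: "1 - a * a - b * b = 0" by (simp add: algebra_simps)
  have "(1 - a * a) * (1 - c * c) = (- (a * c)) * (- (c * a))"
    using m[of 0 2] by (simp only: e00 e22 e02 e20)
  then have b0: "1 - a * a - c * c = 0" by (simp add: algebra_simps)
  have "(1 - b * b) * (1 - c * c) = (- (b * c)) * (- (c * b))"
    using m[of 1 2] by (simp only: e11 e22 e12 e21)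
  then have a0: "1 - b * b - c * c = 0" by (simp add: algebra_simps)
  have "a * a + b * b + c * c = 1" using s by (simp add: power2_eq_square)
  then show False using a0 b0 c0 by linarith
qed

lemma pointwise:
  assumes s: "a^2 + b^2 + c^2 = 1"
    and G: "G \<in> carrier_mat 3 n" and H: "H \<in> carrier_mat n 3"
    and n: "n \<le> 2" and L: "L \<ge> 1"
    and eq: "Mr a b c ^\<^sub>m L = G * H"
  shows "0 < n \<and> \<not> (\<forall>i<3. (Pm a b c * G) $$ (i,0) = 0)"
proof (rule ccontr)
  assume neg: "\<not> (0 < n \<and> \<not> (\<forall>i<3. (Pm a b c * G) $$ (i,0) = 0))"
  let ?M = "Mr a b c" and ?P = "Pm a b c"
  have Mc: "?M \<in> carrier_mat 3 3" and Pc: "?P \<in> carrier_mat 3 3" by (rule carriers)+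
  have "?M ^\<^sub>m (4 * L) = ?P"
    using M4k[OF s, of "L - 1"] L by simp
  moreover have "?M ^\<^sub>m (4 * L) = ?M ^\<^sub>m L * ?M ^\<^sub>m (3 * L)"
    using pow_mat_add[OF Mc, of L "3 * L"] by simp
  ultimately have "?P = (G * H) * ?M ^\<^sub>m (3 * L)" using eq by simp
  also have "\<dots> = G * (H * ?M ^\<^sub>m (3 * L))"
    using G H Mc by (simp add: assoc_mult_mat[of _ 3 n _ 3 _ 3])
  finally have P1: "?P = G * (H * ?M ^\<^sub>m (3 * L))" .
  define K where "K = H * ?M ^\<^sub>m (3 * L)"
  have Kc: "K \<in> carrier_mat n 3" unfolding K_def using H Mc by simp
  define X where "X = ?P * G"
  have Xc: "X \<in> carrier_mat 3 n" unfolding X_def using G Pc by simp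
  have "?P = ?P * ?P" using PP[OF s] by simp
  also have "\<dots> = ?P * (G * K)" using P1 K_def by simp
  also have "\<dots> = X * K" unfolding X_def using Pc G Kc by (simp add: assoc_mult_mat[of _ 3 3 _ n _ 3])
  finally have PX: "?P = X * K" .
  define g where "g i = (if n = 2 then X $$ (i, 1) else 0)" for i
  define h where "h k = (if n = 2 then K $$ (1, k) else 0)" for k
  have "(if i = k then 1 else 0) - pt a b c i * pt a b c k = g i * h k" if ik: "i < 3" "k < 3" for i k
  proof -
    have "(if i = k then 1 else 0) - pt a b c i * pt a b c k = ?P $$ (i,k)"
      using ik by (simp add: Pm_def)
    also have "\<dots> = (X * K) $$ (i,k)" using PX by simp
    also have "\<dots> = (\<Sum>j\<in>{0..<n}. X $$ (i,j) * K $$ (j,k))"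
      using ik Xc Kc by (simp add: scalar_prod_def)
    also have "\<dots> = g i * h k"
    proof -
      have "n = 0 \<or> n = 1 \<or> n = 2" using n by auto
      moreover have "X $$ (i,0) = 0" if "n \<noteq> 0"
        using neg that ik unfolding X_def by auto
      ultimately show ?thesis unfolding g_def h_def
        by (auto simp: atLeast0LessThan lessThan_Suc eval_nat_numeral)
    qed
    finally show ?thesis .
  qed
  then show False by (rule rank1_contra[OF s])
qed

lemma cont_poly1:
  assumes "continuous_map X euclideanreal fa"
  shows "continuous_map X euclideanreal (\<lambda>x. poly (r :: real poly) (fa x))"
proof (induction r)
  case 0 then show ?case by simp
next
  case (pCons d r)
  then show ?case by (simp add: continuous_map_add continuous_map_real_mult assms)
qed

lemma cont_poly2:
  assumes "continuous_map X euclideanreal fa" "continuous_map X euclideanreal fb"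
  shows "continuous_map X euclideanreal (\<lambda>x. poly (poly (h :: real poly poly) [:fb x:]) (fa x))"
proof (induction h)
  case 0 then show ?case by simp
next
  case (pCons d h)
  then show ?case by (simp add: continuous_map_add continuous_map_real_mult assms cont_poly1)
qed

lemma cont_ev:
  assumes "continuous_map X euclideanreal fa" "continuous_map X euclideanreal fb"
    "continuous_map X euclideanreal fc"
  shows "continuous_map X euclideanreal (\<lambda>x. ev (fa x) (fb x) (fc x) q)"
proof (induction q)
  case 0 then show ?case by (simp add: ev_def)
next
  case (pCons d q)
  then show ?case
    by (simp add: ev_def continuous_map_add continuous_map_real_mult assms cont_poly2)
qed

lemma cont_pt: "continuous_map (nsphere 2) euclideanreal (\<lambda>x. pt (x 0) (x 1) (x 2) i)"
  by (cases "i = 0"; cases "i = 1"; simp add: pt_def continuous_map_nsphere_projection)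

lemma ev_mat_pow: "map_mat (ev a b c) (matA ^\<^sub>m k) = Mr a b c ^\<^sub>m k"
proof -
  interpret h: comm_ring_hom "ev a b c" by (rule ev_hom)
  show ?thesis using h.mat_hom_pow[OF matA_carrier, of k] ev_matA by simp
qed

lemma notnil: "\<not> nilpotent_mat matA"
proof
  assume "nilpotent_mat matA"
  then obtain k where k: "matA ^\<^sub>m k = 0\<^sub>m 3 3"
    unfolding nilpotent_mat_def using matA_carrier by auto
  have Mk: "Mr 1 0 0 ^\<^sub>m k = 0\<^sub>m 3 3"
  proof -
    have "map_mat (ev 1 0 0) (0\<^sub>m 3 3) = (0\<^sub>m 3 3 :: real mat)"
      by (rule eq_matI) (auto simp: ev_zero)
    then show ?thesis using ev_mat_pow[of 1 0 0 k] k by simp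
  qed
  have s: "(1::real)^2 + 0^2 + 0^2 = 1" by simp
  have "Pm 1 0 0 = Mr 1 0 0 ^\<^sub>m (k + (4 * Suc k - k))"
  proof -
    have "k + (4 * Suc k - k) = 4 * Suc k" by simp
    then show ?thesis using M4k[OF s, of k] by metis
  qed
  also have "\<dots> = Mr 1 0 0 ^\<^sub>m k * Mr 1 0 0 ^\<^sub>m (4 * Suc k - k)"
    by (rule pow_mat_add[OF carriers(1)])
  also have "\<dots> = 0\<^sub>m 3 3" using Mk carriers(1)[of 1 0 0] by simp
  finally have "Pm 1 0 0 $$ (1,1) = 0" by simp
  then show False by (simp add: Pm_def pt_def)
qed

lemma case_big:
  fixes B U V :: "rpoly3 mat"
  assumes Bc: "B \<in> carrier_mat n n" and dB: "det B \<noteq> 0"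
    and Uc: "U \<in> carrier_mat 3 n" and Vc: "V \<in> carrier_mat n 3"
    and AL: "matA ^\<^sub>m L = U * V" and BL: "B ^\<^sub>m L = V * U"
    and L: "L \<ge> 1" and n: "n \<ge> 3"
  shows False
proof -
  have dBL: "det (B ^\<^sub>m L) \<noteq> 0" using det_pow[OF Bc] dB by simp
  have dAL: "det (matA ^\<^sub>m L) = 0" using det_pow[OF matA_carrier] det_matA L by simp
  show False
  proof (cases "n = 3")
    case True
    have "det (V * U) = det V * det U" using True Uc Vc by (simp add: det_mult[of _ 3])
    also have "\<dots> = det (U * V)" using True Uc Vc by (simp add: det_mult[of _ 3])
    finally show False using dBL dAL AL BL by simp
  next
    case False
    then have n4: "n > 3" using n by simp
    define V' where "V' = Matrix.mat n n (\<lambda>(i,j). if j < 3 then V $$ (i,j) else 0)"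
    define U' where "U' = Matrix.mat n n (\<lambda>(i,j). if i < 3 then U $$ (i,j) else 0)"
    have V'c: "V' \<in> carrier_mat n n" and U'c: "U' \<in> carrier_mat n n" unfolding V'_def U'_def by auto
    have "V' * U' = V * U"
    proof (rule eq_matI)
      fix i j assume ij: "i < dim_row (V * U)" "j < dim_col (V * U)"
      then have i: "i < n" and j: "j < n" using Uc Vc by auto
      have "(V' * U') $$ (i,j) = (\<Sum>k\<in>{0..<n}. V' $$ (i,k) * U' $$ (k,j))"
        using i j V'c U'c by (simp add: scalar_prod_def)
      also have "\<dots> = (\<Sum>k\<in>{0..<3}. V' $$ (i,k) * U' $$ (k,j))"
        using n4 i by (intro sum.mono_neutral_right) (auto simp: V'_def)
      also have "\<dots> = (\<Sum>k\<in>{0..<3}. V $$ (i,k) * U $$ (k,j))"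
        using i j n4 by (intro sum.cong) (auto simp: V'_def U'_def)
      also have "\<dots> = (V * U) $$ (i,j)"
        using i j Uc Vc by (simp add: scalar_prod_def)
      finally show "(V' * U') $$ (i,j) = (V * U) $$ (i,j)" .
    qed (use Uc Vc V'c U'c in auto)
    moreover have "det V' = 0"
    proof -
      have "V' *\<^sub>v unit_vec n 3 = 0\<^sub>v n"
      proof (rule eq_vecI)
        fix i assume "i < dim_vec (0\<^sub>v n :: rpoly3 Matrix.vec)"
        then have i: "i < n" by simp
        have "(V' *\<^sub>v unit_vec n 3) $ i = (\<Sum>k\<in>{0..<n}. V' $$ (i,k) * unit_vec n 3 $ k)"
          using i V'c by (simp add: scalar_prod_def)
        also have "\<dots> = 0"
          using i n4 by (intro sum.neutral) (auto simp: V'_def)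
        finally show "(V' *\<^sub>v unit_vec n 3) $ i = 0\<^sub>v n $ i" using i by simp
      qed (use V'c in auto)
      then show ?thesis
        using det_0_iff_vec_prod_zero[OF V'c] n4 unit_vec_nonzero[of 3 n] unit_vec_carrier[of n 3] by blast
    qed
    ultimately have "det (V * U) = 0" using det_mult[OF V'c U'c] by simp
    then show False using dBL BL by simp
  qed
qed

lemma case_small:
  fixes U V :: "rpoly3 mat"
  assumes Uc: "U \<in> carrier_mat 3 n" and Vc: "V \<in> carrier_mat n 3"
    and AL: "matA ^\<^sub>m L = U * V" and L: "L \<ge> 1" and n: "n \<le> 2"
  shows False
proof -
  define u where "u k x = ev (x 0) (x 1) (x 2) (U $$ (k,0))" for k and x :: "nat \<Rightarrow> real"
  define f where "f x i = (\<Sum>k\<in>{0..<3}. ((if i = k then 1 else 0) - pt (x 0) (x 1) (x 2) i * pt (x 0) (x 1) (x 2) k) * u k x)"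
    for x :: "nat \<Rightarrow> real" and i
  show False
  proof (rule hairy_ball[of f])
    fix i :: nat assume "i \<le> 2"
    have cu: "continuous_map (nsphere 2) euclideanreal (u k)" for k
      unfolding u_def by (intro cont_ev continuous_map_nsphere_projection)
    show "continuous_map (nsphere 2) euclideanreal (\<lambda>x. f x i)"
      unfolding f_def
      by (intro continuous_map_sum continuous_map_real_mult continuous_map_diff cont_pt cu) auto
  next
    fix x assume x: "x \<in> topspace (nsphere 2)"
    then have s: "x 0 * x 0 + x 1 * x 1 + x 2 * x 2 = 1"
      unfolding topspace_nsphere2 by (simp add: power2_eq_square)
    have "x 0 * f x 0 + x 1 * f x 1 + x 2 * f x 2
        = (u 0 x * x 0 + u 1 x * x 1 + u 2 x * x 2) * (1 - (x 0 * x 0 + x 1 * x 1 + x 2 * x 2))"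
      unfolding f_def sum3 by (simp add: pt_def algebra_simps)
    then show "x 0 * f x 0 + x 1 * f x 1 + x 2 * f x 2 = 0" using s by simp
  next
    fix x assume x: "x \<in> topspace (nsphere 2)"
    then have s: "(x 0)^2 + (x 1)^2 + (x 2)^2 = 1"
      unfolding topspace_nsphere2 by simp
    interpret h: comm_ring_hom "ev (x 0) (x 1) (x 2)" by (rule ev_hom)
    let ?G = "map_mat (ev (x 0) (x 1) (x 2)) U"
    let ?H = "map_mat (ev (x 0) (x 1) (x 2)) V"
    have Gc: "?G \<in> carrier_mat 3 n" and Hc: "?H \<in> carrier_mat n 3" using Uc Vc by auto
    have "Mr (x 0) (x 1) (x 2) ^\<^sub>m L = ?G * ?H"
      using ev_mat_pow[of "x 0" "x 1" "x 2" L] AL h.mat_hom_mult[OF Uc Vc] by simp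
    from pointwise[OF s Gc Hc n L this]
    obtain i where n0: "0 < n" and i: "i < 3" and ne: "(Pm (x 0) (x 1) (x 2) * ?G) $$ (i,0) \<noteq> 0"
      by auto
    have "(Pm (x 0) (x 1) (x 2) * ?G) $$ (i,0) = f x i"
    proof -
      have "(Pm (x 0) (x 1) (x 2) * ?G) $$ (i,0)
          = (\<Sum>k\<in>{0..<3}. Pm (x 0) (x 1) (x 2) $$ (i,k) * ?G $$ (k,0))"
        using i n0 Gc carriers(3)[of "x 0" "x 1" "x 2"] by (simp add: scalar_prod_def)
      also have "\<dots> = f x i"
        unfolding f_def u_def using i n0 Uc by (intro sum.cong) (auto simp: Pm_def)
      finally show ?thesis .
    qed
    then show "f x 0 \<noteq> 0 \<or> f x 1 \<noteq> 0 \<or> f x 2 \<noteq> 0"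
      using ne i unfolding less3 by auto
  qed
qed

lemma main_part:
  fixes B :: "rpoly3 mat"
  assumes ns: "nonsingular_mat B" and se: "alg_shift_equiv matA B"
  shows False
proof -
  define n where "n = dim_row B"
  have sq: "square_mat B" and dB: "det B \<noteq> 0"
    using ns unfolding nonsingular_mat_def by blast+
  have Bc: "B \<in> carrier_mat n n" using sq unfolding n_def carrier_mat_def by simp
  from se obtain l where "alg_shift_equiv_lag l matA B" unfolding alg_shift_equiv_def by blast
  then obtain U V where Uc0: "U \<in> carrier_mat (dim_row matA) (dim_row B)"
    and Vc0: "V \<in> carrier_mat (dim_row B) (dim_row matA)"
    and AU: "matA * U = U * B" and VA: "V * matA = B * V"
    and Al: "matA ^\<^sub>m l = U * V" and Bl: "B ^\<^sub>m l = V * U"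
    unfolding alg_shift_equiv_lag_def by blast
  have dA: "dim_row matA = 3" using matA_carrier by simp
  have Uc: "U \<in> carrier_mat 3 n" using Uc0 unfolding dA n_def .
  have Vc: "V \<in> carrier_mat n 3" using Vc0 unfolding dA n_def .
  define V1 where "V1 = V * matA"
  have V1c: "V1 \<in> carrier_mat n 3" unfolding V1_def using Vc matA_carrier by simp
  have AL: "matA ^\<^sub>m Suc l = U * V1"
    using Al Uc Vc matA_carrier unfolding V1_def by (simp add: assoc_mult_mat[of _ 3 n _ 3 _ 3])
  have "B ^\<^sub>m Suc l = (V * U) * B" using Bl by simp
  also have "\<dots> = V * (U * B)" using Vc Uc Bc by (simp add: assoc_mult_mat[of _ n 3 _ n _ n])
  also have "\<dots> = V * (matA * U)" using AU by simp
  also have "\<dots> = V1 * U" unfolding V1_def using Vc Uc matA_carrier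
    by (simp add: assoc_mult_mat[of _ n 3 _ 3 _ n])
  finally have BL: "B ^\<^sub>m Suc l = V1 * U" .
  show False
  proof (cases "n \<le> 2")
    case True
    then show False using case_small[OF Uc V1c AL _ True] by simp
  next
    case False
    then show False using case_big[OF Bc dB Uc V1c AL BL] by simp
  qed
qed

theorem theorem1p2:
  shows "(\<forall>B :: rpoly3 mat. nonsingular_mat B \<longrightarrow> \<not> alg_shift_equiv matA B)
         \<and> \<not> nilpotent_mat matA"
  using main_part notnil by blast

end
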